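(* Let $g(x)=\left(1+\frac{1}{x}\right)^{x}$ for $x>0$. There is an expansion $g(x)=\sum_{j=0}^{\infty}\frac{c_j}{x^j}$ which converges for $x>1$, where the coefficients $c_j$ are given recursively by $c_0=e$ and $$c_{j+1}=\frac{1}{j+1}\sum_{l=0}^{j}(-1)^{j-l+1}\left(\frac{j-l+1}{j-l+2}\right)c_l\qquad (j=0,1,2,\dots).$$ Moreover, as $j\to\infty$, $$c_j=(-1)^j\left(1+\frac{1}{j}\right)+\mathcal{O}\!\left(\frac{\ln j}{j^2}\right).$$
   Context: Here $e$ is Euler's number. The expansion is the (asymptotic, and in fact convergent) expansion of $g(x)$ in powers of $1/x$ for large $x$; equivalently, $c_j$ are the Maclaurin coefficients of $f(z)=(1+z)^{1/z}=\exp\{z^{-1}\ln(1+z)\}$, with the removable singularity at $z=0$ filled in by $f(0)=e$. *)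

theory Defs
  imports "HOL-Analysis.Analysis" "HOL-Library.Landau_Symbols"
begin

fun coeff_c :: "nat \<Rightarrow> real" where
  "coeff_c 0 = exp 1"
| "coeff_c (Suc j) =
     (1 / real (j + 1)) *
     (\<Sum>l\<le>j. (-1) ^ (j - l + 1) * (real (j - l + 1) / real (j - l + 2)) * coeff_c l)"

end

theory Submission
  imports Defs "HOL-Real_Asymp.Real_Asymp"
begin


definition aa :: "nat \<Rightarrow> real" where "aa n = (-1)^n * coeff_c n"

lemma coeff_c_aa: "coeff_c n = (-1)^n * aa n"
  by (simp add: aa_def)

lemma aa_rec: "real (Suc n) * aa (Suc n) = (\<Sum>l\<le>n. (1 - 1 / real (n - l + 2)) * aa l)"
proof -
  have "real (Suc n) * aa (Suc n) = (-1)^(Suc n) *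
     (\<Sum>l\<le>n. (-1) ^ (n - l + 1) * (real (n - l + 1) / real (n - l + 2)) * coeff_c l)"
    by (simp add: aa_def)
  also have "\<dots> = (\<Sum>l\<le>n. (-1)^(Suc n) * ((-1) ^ (n - l + 1) * (real (n - l + 1) / real (n - l + 2)) * coeff_c l))"
    by (simp add: sum_distrib_left)
  also have "\<dots> = (\<Sum>l\<le>n. (1 - 1 / real (n - l + 2)) * aa l)"
  proof (rule sum.cong)
    fix l assume "l \<in> {..n}"
    hence l: "l \<le> n" by simp
    have e1: "(-1::real)^(n - l + 1) * (-1)^l = (-1)^(Suc n)"
      using l by (simp add: power_add[symmetric])
    have e2: "(-1::real)^(Suc n) * (-1)^(Suc n) = 1"
      by (simp add: power_add[symmetric] flip: mult_2)
    have e3: "real (n - l + 1) / real (n - l + 2) = 1 - 1 / real (n - l + 2)"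
      by (simp add: field_simps)
    have "(-1)^(Suc n) * ((-1) ^ (n - l + 1) * (real (n - l + 1) / real (n - l + 2)) * coeff_c l)
        = ((-1)^(Suc n) * ((-1) ^ (n - l + 1) * (-1)^l)) * (real (n - l + 1) / real (n - l + 2)) * aa l"
      by (simp add: coeff_c_aa mult_ac)
    also have "\<dots> = (1 - 1 / real (n - l + 2)) * aa l"
      unfolding e1 e2 e3 by simp
    finally show "(-1)^(Suc n) * ((-1) ^ (n - l + 1) * (real (n - l + 1) / real (n - l + 2)) * coeff_c l)
        = (1 - 1 / real (n - l + 2)) * aa l" .
  qed simp
  finally show ?thesis .
qed

lemma aa_pos: "aa n > 0"
proof (induction n rule: less_induct)
  case (less n)
  show ?case
  proof (cases n)
    case 0 thus ?thesis by (simp add: aa_def)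
  next
    case (Suc m)
    have "(\<Sum>l\<le>m. (1 - 1 / real (m - l + 2)) * aa l) > 0"
    proof (rule sum_pos)
      fix l assume "l \<in> {..m}"
      hence "aa l > 0" using less Suc by auto
      moreover have "1 - 1 / real (m - l + 2) > 0" by (simp add: field_simps)
      ultimately show "(1 - 1 / real (m - l + 2)) * aa l > 0" by simp
    qed auto
    hence "real (Suc m) * aa (Suc m) > 0" by (simp only: aa_rec)
    thus ?thesis using Suc by (simp add: zero_less_mult_iff)
  qed
qed

lemma aa_Suc_le_sum: "real (Suc n) * aa (Suc n) \<le> (\<Sum>l\<le>n. aa l)"
proof -
  have "(\<Sum>l\<le>n. (1 - 1 / real (n - l + 2)) * aa l) \<le> (\<Sum>l\<le>n. aa l)"
  proof (rule sum_mono)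
    fix l
    have "0 \<le> 1 / real (n - l + 2) * aa l" using aa_pos[of l] by simp
    thus "(1 - 1 / real (n - l + 2)) * aa l \<le> aa l" by (simp add: algebra_simps)
  qed
  thus ?thesis by (simp only: aa_rec)
qed

lemma aa_sum_le: "(\<Sum>l\<le>n. aa l) \<le> exp 1 * real (Suc n)"
proof (induction n)
  case 0 thus ?case by (simp add: aa_def)
next
  case (Suc n)
  have "real (Suc n) * aa (Suc n) \<le> exp 1 * real (Suc n)"
    using aa_Suc_le_sum[of n] Suc by linarith
  hence "aa (Suc n) \<le> exp 1" by simp
  thus ?case using Suc by (simp add: algebra_simps)
qed

lemma aa_le: "aa n \<le> exp 1"
proof (cases n)
  case 0 thus ?thesis by (simp add: aa_def)
next
  case (Suc m)
  have "real (Suc m) * aa (Suc m) \<le> exp 1 * real (Suc m)"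
    using aa_Suc_le_sum[of m] aa_sum_le[of m] by linarith
  thus ?thesis using Suc by simp
qed

lemma abs_coeff_c_le: "\<bar>coeff_c n\<bar> \<le> exp 1"
  using aa_le[of n] aa_pos[of n] by (simp add: coeff_c_aa abs_mult)



definition eta :: "nat \<Rightarrow> real" where "eta k = (-1)^k / real (Suc k)"
definition CC :: "real \<Rightarrow> real" where "CC x = (\<Sum>n. coeff_c n * x^n)"
definition HH :: "real \<Rightarrow> real" where "HH x = (\<Sum>n. eta n * x^n)"

lemma bounded_coeff_summable:
  fixes f :: "nat \<Rightarrow> real"
  assumes "\<And>n. \<bar>f n\<bar> \<le> M" "\<bar>x\<bar> < 1"
  shows "summable (\<lambda>n. norm (f n * x^n))"
proof (rule summable_comparison_test'[where g = "\<lambda>n. M * \<bar>x\<bar>^n" and N = 0])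
  show "summable (\<lambda>n. M * \<bar>x\<bar> ^ n)"
    using assms(2) by (intro summable_mult summable_geometric) simp
  fix n
  show "norm (norm (f n * x ^ n)) \<le> M * \<bar>x\<bar> ^ n"
  proof -
    have "\<bar>f n\<bar> * \<bar>x\<bar>^n \<le> M * \<bar>x\<bar>^n" by (rule mult_right_mono) (use assms(1) in auto)
    thus ?thesis by (simp add: abs_mult power_abs)
  qed
qed

lemma bounded_coeff_summable':
  fixes f :: "nat \<Rightarrow> real"
  assumes "\<And>n. \<bar>f n\<bar> \<le> M" "\<bar>x\<bar> < 1"
  shows "summable (\<lambda>n. f n * x^n)"
  by (rule summable_norm_cancel[OF bounded_coeff_summable[OF assms]])

lemma diffs_summable:
  fixes f :: "nat \<Rightarrow> real"
  assumes "\<And>n. \<bar>f n\<bar> \<le> M" "\<bar>x\<bar> < 1"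
  shows "summable (\<lambda>n. norm (diffs f n * x^n))"
proof -
  define K where "K = (\<bar>x\<bar> + 1) / 2"
  have K: "\<bar>x\<bar> < K" "K < 1" using assms(2) by (auto simp: K_def)
  have "summable (\<lambda>n. diffs f n * K ^ n)"
  proof (rule termdiff_converges[where K = 1])
    show "norm K < 1" using K by simp
    fix y :: real assume "norm y < 1"
    thus "summable (\<lambda>n. f n * y^n)" by (intro bounded_coeff_summable'[OF assms(1)]) simp
  qed
  moreover have "norm x < norm K" using K by auto
  ultimately show ?thesis by (rule powser_insidea)
qed

lemma abs_eta: "\<bar>eta n\<bar> \<le> 1"
  by (simp add: eta_def abs_mult)

lemma diffs_coeff_c: "diffs coeff_c n = (\<Sum>l\<le>n. coeff_c l * diffs eta (n - l))"
proof -
  have "diffs coeff_c n = (\<Sum>l\<le>n. (-1) ^ (n - l + 1) * (real (n - l + 1) / real (n - l + 2)) * coeff_c l)"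
    by (simp add: diffs_def)
  also have "\<dots> = (\<Sum>l\<le>n. coeff_c l * diffs eta (n - l))"
    by (rule sum.cong[OF refl]) (simp add: diffs_def eta_def)
  finally show ?thesis .
qed

lemma CC_deriv:
  assumes "\<bar>x\<bar> < 1"
  shows "(CC has_field_derivative (\<Sum>n. diffs coeff_c n * x^n)) (at x)"
  unfolding CC_def
  by (rule termdiffs_strong'[where K = 1])
     (use assms abs_coeff_c_le in \<open>auto intro: bounded_coeff_summable'\<close>)

lemma HH_deriv:
  assumes "\<bar>x\<bar> < 1"
  shows "(HH has_field_derivative (\<Sum>n. diffs eta n * x^n)) (at x)"
  unfolding HH_def
  by (rule termdiffs_strong'[where K = 1])
     (use assms abs_eta in \<open>auto intro: bounded_coeff_summable'\<close>)

lemma CC_deriv_eq: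
  assumes "\<bar>x\<bar> < 1"
  shows "(\<Sum>n. diffs coeff_c n * x^n) = CC x * (\<Sum>n. diffs eta n * x^n)"
proof -
  have "CC x * (\<Sum>n. diffs eta n * x^n) = (\<Sum>k. \<Sum>i\<le>k. (coeff_c i * x^i) * (diffs eta (k - i) * x^(k-i)))"
    unfolding CC_def
    by (rule Cauchy_product[OF bounded_coeff_summable[OF abs_coeff_c_le assms] diffs_summable[OF abs_eta assms]])
  also have "\<dots> = (\<Sum>n. diffs coeff_c n * x^n)"
  proof (rule suminf_cong)
    fix k
    have "(\<Sum>i\<le>k. (coeff_c i * x^i) * (diffs eta (k - i) * x^(k-i)))
        = (\<Sum>i\<le>k. (coeff_c i * diffs eta (k - i)) * x^k)"
    proof (rule sum.cong[OF refl])
      fix i assume "i \<in> {..k}"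
      hence "x^i * x^(k-i) = x^k" by (simp add: power_add[symmetric])
      moreover have "(coeff_c i * x^i) * (diffs eta (k - i) * x^(k-i)) = (coeff_c i * diffs eta (k - i)) * (x^i * x^(k-i))"
        by (simp add: mult_ac)
      ultimately show "(coeff_c i * x^i) * (diffs eta (k - i) * x^(k-i)) = (coeff_c i * diffs eta (k - i)) * x^k"
        by simp
    qed
    also have "\<dots> = diffs coeff_c k * x^k"
      by (simp add: diffs_coeff_c sum_distrib_right)
    finally show "(\<Sum>i\<le>k. (coeff_c i * x^i) * (diffs eta (k - i) * x^(k-i))) = diffs coeff_c k * x^k" .
  qed
  finally show ?thesis by simp
qed

lemma CC_eq_exp_HH:
  assumes "\<bar>x\<bar> < 1"
  shows "CC x = exp (HH x)"
proof -
  define G where "G y = CC y * exp (- HH y)" for y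
  have "\<exists>c. \<forall>y\<in>{-1<..<1}. G y = c"
  proof (rule has_field_derivative_zero_constant)
    fix y :: real assume "y \<in> {-1<..<1}"
    hence y: "\<bar>y\<bar> < 1" by auto
    have "(G has_field_derivative
        (CC y * (exp (- HH y) * (- (\<Sum>n. diffs eta n * y^n))) + (\<Sum>n. diffs coeff_c n * y^n) * exp (- HH y))) (at y)"
      unfolding G_def
      by (rule DERIV_mult'[OF CC_deriv[OF y] DERIV_fun_exp[OF DERIV_minus[OF HH_deriv[OF y]]]])
    also have "CC y * (exp (- HH y) * (- (\<Sum>n. diffs eta n * y^n))) + (\<Sum>n. diffs coeff_c n * y^n) * exp (- HH y) = 0"
      unfolding CC_deriv_eq[OF y] by (simp add: algebra_simps)
    finally show "(G has_field_derivative 0) (at y within {-1<..<1})"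
      by (rule has_field_derivative_at_within)
  qed simp
  then obtain c where c: "\<And>y. y \<in> {-1<..<1} \<Longrightarrow> G y = c" by blast
  have "x \<in> {-1<..<1}" using assms by auto
  hence "G x = G 0" using c[of x] c[of 0] by simp
  also have "G 0 = 1"
  proof -
    have "HH 0 = 1" by (simp only: HH_def powser_zero) (simp add: eta_def)
    moreover have "CC 0 = exp 1" by (simp only: CC_def powser_zero) simp
    ultimately show ?thesis by (simp add: G_def exp_minus)
  qed
  finally have "CC x * exp (- HH x) = 1" by (simp add: G_def)
  thus ?thesis by (simp add: exp_minus field_simps)
qed

lemma HH_eq:
  assumes "\<bar>x\<bar> < 1" "x \<noteq> 0"
  shows "HH x = ln (1 + x) / x"
proof -
  have "(\<lambda>n. - ((-x)^n) / of_nat n) sums ln (1 + x)"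
    by (rule ln_series') (use assms in auto)
  hence "(\<lambda>n. - ((-x)^(Suc n)) / of_nat (Suc n)) sums ln (1 + x)"
    by (subst sums_Suc_iff) simp
  moreover have "- ((-x)^(Suc n)) / real (Suc n) = x * (eta n * x^n)" for n
    by (simp add: eta_def power_minus[of x])
  ultimately have "(\<lambda>n. x * (eta n * x^n)) sums ln (1 + x)"
    by simp
  hence "(\<lambda>n. (x * (eta n * x^n)) / x) sums (ln (1 + x) / x)"
    by (rule sums_divide)
  hence "(\<lambda>n. eta n * x^n) sums (ln (1 + x) / x)"
    using assms by simp
  thus ?thesis unfolding HH_def by (rule sums_unique[symmetric])
qed

lemma part1:
  assumes "x > (1::real)"
  shows "(\<lambda>j. coeff_c j / x ^ j) sums ((1 + 1 / x) powr x)"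
proof -
  have z: "\<bar>1/x\<bar> < 1" "1/x \<noteq> 0" using assms by auto
  have "(\<lambda>j. coeff_c j * (1/x) ^ j) sums CC (1/x)"
    unfolding CC_def
    by (rule summable_sums, rule bounded_coeff_summable'[OF abs_coeff_c_le z(1)])
  moreover have "1/x > 0" using assms by simp
  hence "1 + 1/x \<noteq> 0" by linarith
  moreover have "CC (1/x) = (1 + 1 / x) powr x"
    using assms \<open>1 + 1/x \<noteq> 0\<close> by (simp add: CC_eq_exp_HH[OF z(1)] HH_eq[OF z] powr_def)
  ultimately show ?thesis by (simp add: power_divide)
qed



lemma sum_rev_atMost: "(\<Sum>l\<le>n. g (n - l)) = (\<Sum>l\<le>(n::nat). (g l :: real))"
  using sum.atLeastAtMost_rev[of g 0 n] by (simp add: atMost_atLeast0)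

lemma tel_sum: "(\<Sum>l\<le>n. 1 / ((real l + 2) * (real l + 3))) = 1/2 - 1 / (real n + 3)"
proof (induction n)
  case 0 show ?case by simp
next
  case (Suc n)
  have p: "real n + 3 > 0" "real n + 4 > 0" by simp_all
  have q: "1/((real n+3)*(real n+4)) = 1/(real n+3) - 1/(real n+4)"
    using p by (simp add: field_simps)
  have eq: "1/2 - 1/(real n+3) + 1/((real n+3)*(real n+4)) = 1/2 - 1/(real n+4)"
    using q by linarith
  have e2: "real (Suc n) + 2 = real n + 3" "real (Suc n)+3 = real n + 4" by simp_all
  show ?case by (simp only: sum.atMost_Suc Suc.IH e2 eq)
qed

lemma tel_sum': "(\<Sum>l\<le>n. 1 / ((real (n - l) + 2) * (real (n - l) + 3))) = 1/2 - 1 / (real n + 3)"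
  using sum_rev_atMost[of "\<lambda>l. 1 / ((real l + 2) * (real l + 3))" n] tel_sum[of n] by simp

lemma diffrec:
  "real (n+2) * (aa (n+2) - aa (n+1)) = - aa (n+1) / 2 +
     (\<Sum>l\<le>n. aa l / ((real (n - l) + 2) * (real (n - l) + 3)))"
proof -
  have r1: "real (n+2) * aa (n+2) = (\<Sum>l\<le>n. (1 - 1 / (real (n - l) + 3)) * aa l) + aa (Suc n) / 2"
  proof -
    have "real (n+2) * aa (n+2) = (\<Sum>l\<le>Suc n. (1 - 1 / real (Suc n - l + 2)) * aa l)"
      using aa_rec[of "Suc n"] by simp
    also have "\<dots> = (\<Sum>l\<le>n. (1 - 1 / real (Suc n - l + 2)) * aa l) + aa (Suc n) / 2"
      by (simp add: sum.atMost_Suc)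
    also have "(\<Sum>l\<le>n. (1 - 1 / real (Suc n - l + 2)) * aa l) = (\<Sum>l\<le>n. (1 - 1 / (real (n - l) + 3)) * aa l)"
      by (rule sum.cong[OF refl]) (simp add: Suc_diff_le of_nat_diff)
    finally show ?thesis .
  qed
  have r0: "real (n+1) * aa (n+1) = (\<Sum>l\<le>n. (1 - 1 / (real (n - l) + 2)) * aa l)"
    using aa_rec[of n] by (simp add: add.commute)
  have d: "(\<Sum>l\<le>n. (1 - 1 / (real (n - l) + 3)) * aa l) - (\<Sum>l\<le>n. (1 - 1 / (real (n - l) + 2)) * aa l)
     = (\<Sum>l\<le>n. aa l / ((real (n - l) + 2) * (real (n - l) + 3)))"
    unfolding sum_subtractf[symmetric]
    by (rule sum.cong[OF refl]) (simp add: field_simps)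
  have "real (n+2) * (aa (n+2) - aa (n+1)) = real (n+2) * aa (n+2) - real (n+1) * aa (n+1) - aa (n+1)"
    by (simp add: algebra_simps)
  also have "\<dots> = - aa (n+1) / 2 + (\<Sum>l\<le>n. aa l / ((real (n - l) + 2) * (real (n - l) + 3)))"
    using r1 r0 d by simp
  finally show ?thesis .
qed

lemma Rform:
  "real (n+2) * (aa (n+2) - aa (n+1)) = - aa (n+1) / (real n + 3) +
     (\<Sum>l\<le>n. (aa l - aa (n+1)) / ((real (n - l) + 2) * (real (n - l) + 3)))"
proof -
  have "(\<Sum>l\<le>n. aa l / ((real (n - l) + 2) * (real (n - l) + 3)))
      = (\<Sum>l\<le>n. (aa l - aa (n+1)) / ((real (n - l) + 2) * (real (n - l) + 3)))
        + aa (n+1) * (\<Sum>l\<le>n. 1 / ((real (n - l) + 2) * (real (n - l) + 3)))"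
    by (simp add: sum_distrib_left sum.distrib[symmetric] diff_divide_distrib)
  also have "(\<Sum>l\<le>n. 1 / ((real (n - l) + 2) * (real (n - l) + 3))) = 1/2 - 1 / (real n + 3)"
    by (rule tel_sum')
  finally show ?thesis using diffrec[of n] by (simp add: algebra_simps)
qed

lemma harm_10_le: "harm m \<le> (real m + 2) / 4" if "m \<ge> 10" for m :: nat
  using that
proof (induction m rule: dec_induct)
  case base
  have "harm (10::nat) = (7381/2520::real)"
    by (simp add: harm_def eval_nat_numeral atLeastAtMostSuc_conv)
  thus ?case by simp
next
  case (step m)
  have "inverse (real (Suc m)) \<le> 1/4" using step(1) by (simp add: field_simps)
  thus ?case using step(3) by (simp add: harm_Suc)
qed

lemma harm_le_ln: "harm m \<le> 1 + ln (real m)" if "m \<ge> 1" for m :: nat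
  using euler_mascheroni_sequence_decreasing[of 1 m] that by (simp add: harm_def)



lemma term_ineq:
  fixes L N :: real assumes "1 \<le> L" "L \<le> N"
  shows "(1/L - 1/(N+1))/((N-L+2)*(N-L+3)) \<le> (1/L + 1/(N+1-L))/((N+1)*(N+3))"
proof -
  define u where "u = N + 1 - L"
  have u: "u \<ge> 1" using assms by (simp add: u_def)
  have N: "N = L + u - 1" by (simp add: u_def)
  have L0: "L > 0" using assms by simp
  have lhs: "(1/L - 1/(N+1))/((N-L+2)*(N-L+3)) = u / (L*(L+u)*(u+1)*(u+2))"
    using u L0 by (simp add: N field_simps) 
  have r1: "1/L + 1/(N+1-L) = (L+u)/(L*u)" using u L0 by (simp add: u_def field_simps)
  have r2: "(N+1)*(N+3) = (L+u)*(L*u*(L+u+2)) / (L*u)" using u L0 by (simp add: N field_simps)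
  have rhs: "(1/L + 1/(N+1-L))/((N+1)*(N+3)) = 1 / (L*u*(L+u+2))"
  proof -
    have "(1/L + 1/(N+1-L))/((N+1)*(N+3)) = ((L+u)/(L*u)) / ((L+u)*(L*u*(L+u+2)) / (L*u))"
      by (simp only: r1 r2)
    also have "\<dots> = (L+u) / ((L+u)*(L*u*(L+u+2)))"
      using u L0 by simp
    also have "\<dots> = 1 / (L*u*(L+u+2))"
      using u L0 by (intro nonzero_divide_mult_cancel_left) simp
    finally show ?thesis .
  qed
  have key: "u*(u*(L+u+2)) \<le> (L+u)*((u+1)*(u+2))"
  proof -
    have "(L+u)*((u+1)*(u+2)) - u*(u*(L+u+2)) = (3*L*u + 2*L + u^2 + 2*u)"
      by (simp add: algebra_simps power2_eq_square)
    also have "\<dots> \<ge> 0" using u L0 by simp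
    finally show ?thesis by simp
  qed
  have p1: "L*u*(L+u+2) > 0" "L*(L+u)*(u+1)*(u+2) > 0" "(L+u)*((u+1)*(u+2)) > 0" using u L0 by simp_all
  have "u / (L*(L+u)*(u+1)*(u+2)) \<le> 1 / (L*u*(L+u+2))"
    using key p1 by (simp add: divide_simps)
  thus ?thesis using lhs rhs by simp
qed

lemma aa_diff_le_e: "\<bar>aa i - aa j\<bar> \<le> exp 1"
  using aa_pos[of i] aa_pos[of j] aa_le[of i] aa_le[of j] by linarith

lemma gap:
  assumes H: "\<And>j. l \<le> j \<Longrightarrow> j < m \<Longrightarrow> \<bar>aa (Suc j) - aa j\<bar> \<le> C / (real j * (real j + 1))"
    and l: "1 \<le> l" and lm: "l \<le> m"
  shows "\<bar>aa l - aa m\<bar> \<le> C * (1 / real l - 1 / real m)"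
  using lm H
proof (induction m rule: dec_induct)
  case base thus ?case by simp
next
  case (step m)
  have m1: "real m \<ge> 1" using step(1) l by simp
  have "\<bar>aa l - aa (Suc m)\<bar> \<le> \<bar>aa l - aa m\<bar> + \<bar>aa (Suc m) - aa m\<bar>" by linarith
  also have "\<bar>aa l - aa m\<bar> \<le> C * (1 / real l - 1 / real m)"
    using step(3,4) by simp
  also have "\<bar>aa (Suc m) - aa m\<bar> \<le> C / (real m * (real m + 1))"
    using step(1,2,4) by simp
  also have "C * (1 / real l - 1 / real m) + C / (real m * (real m + 1)) = C * (1 / real l - 1 / real (Suc m))"
  proof -
    have "1 / (real m * (real m + 1)) = 1 / real m - 1 / (real m + 1)" using m1 by (simp add: field_simps)
    hence "C / (real m * (real m + 1)) = C * (1 / real m - 1 / (real m + 1))" by (metis times_divide_eq_right mult_1_right)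
    thus ?thesis by (simp add: algebra_simps)
  qed
  finally show ?case by simp
qed

lemma harm_rev: "(\<Sum>l=1..n. 1 / (real n + 1 - real l)) = harm n"
proof -
  have "(\<Sum>l=1..n. 1 / (real n + 1 - real l)) = (\<Sum>l=1..n. 1 / real (n + 1 - l))"
    by (rule sum.cong[OF refl]) (simp add: of_nat_diff)
  also have "\<dots> = (\<Sum>l=1..n. 1 / real l)"
    using sum.atLeastAtMost_rev[of "\<lambda>l. 1 / real l" 1 n] by simp
  also have "\<dots> = harm n" by (simp add: harm_def divide_inverse)
  finally show ?thesis .
qed

lemma Rbound:
  assumes C: "C \<ge> 0"
    and G: "\<And>l. 1 \<le> l \<Longrightarrow> l \<le> n + 1 \<Longrightarrow> \<bar>aa l - aa (n+1)\<bar> \<le> C * (1 / real l - 1 / real (n+1))"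
  shows "\<bar>\<Sum>l\<le>n. (aa l - aa (n+1)) / ((real (n - l) + 2) * (real (n - l) + 3))\<bar>
     \<le> exp 1 / ((real n + 2) * (real n + 3)) + 2 * C * harm n / ((real n + 1) * (real n + 3))"
proof -
  define T where "T l = (aa l - aa (n+1)) / ((real (n - l) + 2) * (real (n - l) + 3))" for l
  have "\<bar>\<Sum>l\<le>n. T l\<bar> \<le> (\<Sum>l\<le>n. \<bar>T l\<bar>)" by (rule sum_abs)
  also have "\<dots> = \<bar>T 0\<bar> + (\<Sum>l=1..n. \<bar>T l\<bar>)"
    by (simp add: atMost_atLeast0 sum.atLeast_Suc_atMost)
  also have "\<bar>T 0\<bar> \<le> exp 1 / ((real n + 2) * (real n + 3))"
  proof -
    have "\<bar>T 0\<bar> = \<bar>aa 0 - aa (n+1)\<bar> / ((real n + 2) * (real n + 3))"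
      by (simp add: T_def abs_divide)
    also have "\<dots> \<le> exp 1 / ((real n + 2) * (real n + 3))"
      by (rule divide_right_mono[OF aa_diff_le_e]) simp
    finally show ?thesis .
  qed
  also have "(\<Sum>l=1..n. \<bar>T l\<bar>) \<le> (\<Sum>l=1..n. C * ((1 / real l + 1 / (real n + 1 - real l)) / ((real n + 1) * (real n + 3))))"
  proof (rule sum_mono)
    fix l assume "l \<in> {1..n}"
    hence l: "1 \<le> l" "l \<le> n" by auto
    have rl: "real (n - l) = real n - real l" using l by (simp add: of_nat_diff)
    have "\<bar>T l\<bar> = \<bar>aa l - aa (n+1)\<bar> / ((real (n - l) + 2) * (real (n - l) + 3))"
      by (simp add: T_def abs_divide)
    also have "\<dots> \<le> C * (1 / real l - 1 / real (n+1)) / ((real (n - l) + 2) * (real (n - l) + 3))"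
      by (rule divide_right_mono[OF G]) (use l in auto)
    also have "\<dots> = C * ((1 / real l - 1 / (real n + 1)) / ((real n - real l + 2) * (real n - real l + 3)))"
      by (simp add: rl)
    also have "\<dots> \<le> C * ((1 / real l + 1 / (real n + 1 - real l)) / ((real n + 1) * (real n + 3)))"
      by (rule mult_left_mono[OF term_ineq C]) (use l in auto)
    finally show "\<bar>T l\<bar> \<le> C * ((1 / real l + 1 / (real n + 1 - real l)) / ((real n + 1) * (real n + 3)))" .
  qed
  also have "(\<Sum>l=1..n. C * ((1 / real l + 1 / (real n + 1 - real l)) / ((real n + 1) * (real n + 3))))
      = C / ((real n + 1) * (real n + 3)) * ((\<Sum>l=1..n. 1 / real l) + (\<Sum>l=1..n. 1 / (real n + 1 - real l)))"
    by (simp add: sum_distrib_left sum.distrib[symmetric] field_simps)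
  also have "\<dots> = 2 * C * harm n / ((real n + 1) * (real n + 3))"
  proof -
    have "(\<Sum>l=1..n. 1 / real l) = harm n" by (simp add: harm_def divide_inverse)
    thus ?thesis by (simp only: harm_rev) simp
  qed
  finally show ?thesis by (simp add: T_def)
qed

definition CB :: real where "CB = 90 * exp 1"

lemma boot: "j \<ge> 1 \<Longrightarrow> \<bar>aa (Suc j) - aa j\<bar> \<le> CB / (real j * (real j + 1))"
proof (induction j rule: less_induct)
  case (less j)
  show ?case
  proof (cases "j \<le> 9")
    case True
    have "real j * (real j + 1) \<le> 90"
    proof -
      have "real j \<le> 9" using True by simp
      hence "real j * (real j + 1) \<le> 9 * (9 + 1)" by (intro mult_mono) auto
      thus ?thesis by simp
    qed
    moreover have "real j * (real j + 1) > 0" using less(2) by simp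
    ultimately have "CB / 90 \<le> CB / (real j * (real j + 1))"
      by (intro divide_left_mono) (auto simp: CB_def)
    hence "exp 1 \<le> CB / (real j * (real j + 1))" by (simp add: CB_def)
    thus ?thesis using aa_diff_le_e[of "Suc j" j] by linarith
  next
    case False
    then obtain n where n: "j = n + 1" "n \<ge> 9" by (metis add.commute add_Suc_right le_SucE not_less_eq_eq plus_1_eq_Suc le_add2 nat_le_iff_add)
    have CB0: "CB \<ge> 0" by (simp add: CB_def)
    have G: "\<bar>aa l - aa (n+1)\<bar> \<le> CB * (1 / real l - 1 / real (n+1))" if "1 \<le> l" "l \<le> n + 1" for l
    proof (rule gap[OF _ that])
      fix i assume i: "l \<le> i" "i < n + 1"
      show "\<bar>aa (Suc i) - aa i\<bar> \<le> CB / (real i * (real i + 1))"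
        using less.IH[of i] i n that(1) by simp
    qed
    define R where "R = (\<Sum>l\<le>n. (aa l - aa (n+1)) / ((real (n - l) + 2) * (real (n - l) + 3)))"
    have RB: "\<bar>R\<bar> \<le> exp 1 / ((real n + 2) * (real n + 3)) + 2 * CB * harm n / ((real n + 1) * (real n + 3))"
      unfolding R_def by (rule Rbound[OF CB0 G])
    have hn: "harm n \<le> (real n + 3) / 4"
    proof -
      have "harm (n+1) \<le> (real (n+1) + 2) / 4" using n by (intro harm_10_le) simp
      moreover have "harm n \<le> (harm (n+1) :: real)" by (rule harm_mono) simp
      ultimately show ?thesis by simp
    qed
    have X: "real n \<ge> 9" using n by simp
    have eq: "real (n+2) * (aa (n+2) - aa (n+1)) = - aa (n+1) / (real n + 3) + R"
      unfolding R_def by (rule Rform)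
    have a1: "0 < aa (n+1)" "aa (n+1) \<le> exp 1" using aa_pos aa_le by auto
    define X where "X = real n"
    have X9: "X \<ge> 9" using X by (simp add: X_def)
    have s1: "\<bar>real (n+2) * (aa (n+2) - aa (n+1))\<bar> \<le> exp 1 / (X + 3) + \<bar>R\<bar>"
    proof -
      have "aa (n+1) / (X + 3) \<le> exp 1 / (X + 3)" using a1 X9 by (intro divide_right_mono) auto
      moreover have "aa (n+1) / (X + 3) > 0" using a1 X9 by simp
      ultimately show ?thesis unfolding eq X_def by linarith
    qed
    have s2: "2 * CB * harm n / ((X + 1) * (X + 3)) \<le> CB / (2 * (X + 1))"
    proof -
      have "2 * CB * harm n / ((X + 1) * (X + 3)) \<le> 2 * CB * ((X + 3) / 4) / ((X + 1) * (X + 3))"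
        using hn CB0 X9 by (intro divide_right_mono mult_left_mono) (auto simp: X_def)
      also have "\<dots> = (CB / 2) * ((X + 3) / ((X + 1) * (X + 3)))"
      proof -
        have num: "2 * CB * ((X + 3) / 4) = (CB / 2) * (X + 3)" by (simp add: field_simps)
        show ?thesis unfolding num by (rule times_divide_eq_right[symmetric])
      qed
      also have "(X + 3) / ((X + 1) * (X + 3)) = 1 / (X + 1)"
        using X9 by (intro nonzero_divide_mult_cancel_right) simp
      also have "(CB / 2) * (1 / (X + 1)) = CB / (2 * (X + 1))" by simp
      finally show ?thesis .
    qed
    have s3: "exp 1 / (X + 3) + exp 1 / ((X + 2) * (X + 3)) \<le> exp 1 / (X + 1)"
    proof -
      have nz: "X + 2 \<noteq> 0" "X + 3 \<noteq> 0" using X9 by auto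
      have p: "X + 2 > 0" "X + 3 > 0" using X9 by auto
      have q: "1/((X+2)*(X+3)) = 1/(X+2) - 1/(X+3)" using p by (simp add: field_simps)
      have "exp 1 / ((X+2)*(X+3)) = exp 1 * (1/(X+2) - 1/(X+3))" using q by (metis times_divide_eq_right mult_1_right)
      hence "exp 1 / (X + 3) + exp 1 / ((X + 2) * (X + 3)) = exp 1 / (X + 2)" by (simp add: algebra_simps)
      also have "\<dots> \<le> exp 1 / (X + 1)" using X9 by (intro divide_left_mono) auto
      finally show ?thesis .
    qed
    have s4: "exp 1 / (X + 1) + CB / (2 * (X + 1)) \<le> CB / (X + 1)"
    proof -
      have "exp 1 \<le> CB / 2" by (simp add: CB_def)
      hence h0: "exp 1 / (X + 1) \<le> (CB / 2) / (X + 1)" using X9 by (intro divide_right_mono) auto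
      have h1: "(CB/2)/(X+1) + (CB/2)/(X+1) = CB/(X+1)" by (metis add_divide_distrib field_sum_of_halves)
      have h2: "CB/(2*(X+1)) = (CB/2)/(X+1)" by simp
      have "exp 1/(X+1) + (CB/2)/(X+1) \<le> (CB/2)/(X+1) + (CB/2)/(X+1)" using h0 by (rule add_right_mono)
      thus ?thesis unfolding h2 h1 .
    qed
    have "\<bar>real (n+2) * (aa (n+2) - aa (n+1))\<bar> \<le> CB / (X + 1)"
      using s1 RB s2 s3 s4 unfolding X_def by linarith
    moreover have "\<bar>real (n+2) * (aa (n+2) - aa (n+1))\<bar> = (X + 2) * \<bar>aa (n+2) - aa (n+1)\<bar>"
    proof -
      have "real (n+2) = X + 2" by (simp add: X_def)
      thus ?thesis using X9 by (simp add: abs_mult)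
    qed
    ultimately have "(X + 2) * \<bar>aa (n+2) - aa (n+1)\<bar> \<le> CB / (X + 1)" by simp
    hence "(X + 2) * \<bar>aa (n+2) - aa (n+1)\<bar> * (X + 1) \<le> CB"
      using X9 by (subst (asm) pos_le_divide_eq) auto
    hence "\<bar>aa (n+2) - aa (n+1)\<bar> * ((X + 1) * (X + 2)) \<le> CB"
      by (simp add: mult_ac)
    hence "\<bar>aa (n+2) - aa (n+1)\<bar> \<le> CB / ((X + 1) * (X + 2))"
      using X9 by (subst pos_le_divide_eq) auto
    thus ?thesis using n by (simp add: X_def add_ac)
  qed
qed



lemma CB_pos: "CB > 0" by (simp add: CB_def)

lemma inv_diff: "real m \<ge> 1 \<Longrightarrow> C / (real m * (real m + 1)) = C / real m - C / (real m + 1)"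
proof -
  assume m: "real m \<ge> 1"
  have "1 / (real m * (real m + 1)) = 1 / real m - 1 / (real m + 1)" using m by (simp add: field_simps)
  hence "C * (1 / (real m * (real m + 1))) = C * (1 / real m - 1 / (real m + 1))" by simp
  thus ?thesis by (simp add: algebra_simps)
qed

lemma aa_conv: "\<exists>L. aa \<longlonglongrightarrow> L"
proof -
  define v where "v j = aa (Suc j) - CB / (real j + 1)" for j
  have "incseq v"
  proof (rule incseq_SucI)
    fix j
    have "\<bar>aa (Suc (Suc j)) - aa (Suc j)\<bar> \<le> CB / (real (Suc j) * (real (Suc j) + 1))"
      by (rule boot) simp
    also have "\<dots> = CB / real (Suc j) - CB / (real (Suc j) + 1)" by (rule inv_diff) simp
    finally show "v j \<le> v (Suc j)" unfolding v_def by (simp add: add_ac)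
  qed
  moreover have "\<forall>i. v i \<le> exp 1"
  proof
    fix i
    have "CB / (real i + 1) \<ge> 0" using CB_pos by simp
    thus "v i \<le> exp 1" using aa_le[of "Suc i"] unfolding v_def by linarith
  qed
  ultimately obtain L1 where L1: "v \<longlonglongrightarrow> L1" by (rule incseq_convergent)
  have "(\<lambda>j. CB / (real j + 1)) \<longlonglongrightarrow> 0" by real_asymp
  hence "(\<lambda>j. v j + CB / (real j + 1)) \<longlonglongrightarrow> L1 + 0" by (intro tendsto_add L1)
  hence "(\<lambda>j. aa (Suc j)) \<longlonglongrightarrow> L1" by (simp add: v_def)
  hence "aa \<longlonglongrightarrow> L1" by (rule LIMSEQ_imp_Suc)
  thus ?thesis by blast
qed

lemma tele:
  fixes x w :: "nat \<Rightarrow> real"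
  assumes x: "x \<longlonglongrightarrow> L" and w: "w \<longlonglongrightarrow> 0"
    and step: "\<And>m. m \<ge> n \<Longrightarrow> \<bar>x (Suc m) - x m\<bar> \<le> w m - w (Suc m)"
  shows "\<bar>x n - L\<bar> \<le> w n"
proof -
  have bnd: "\<bar>x M - x n\<bar> \<le> w n - w M" if "M \<ge> n" for M
    using that
  proof (induction M rule: dec_induct)
    case base thus ?case by simp
  next
    case (step M)
    have "\<bar>x (Suc M) - x n\<bar> \<le> \<bar>x M - x n\<bar> + \<bar>x (Suc M) - x M\<bar>" by linarith
    thus ?case using step.IH assms(3)[OF step.hyps(1)] by linarith
  qed
  have "(\<lambda>M. \<bar>x M - x n\<bar>) \<longlonglongrightarrow> \<bar>L - x n\<bar>" by (intro tendsto_intros x)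
  moreover have "(\<lambda>M. w n - w M) \<longlonglongrightarrow> w n - 0" by (intro tendsto_intros w)
  ultimately have "\<bar>L - x n\<bar> \<le> w n - 0"
    by (rule LIMSEQ_le) (use bnd in auto)
  thus ?thesis by simp
qed

definition LL :: real where "LL = lim aa"

lemma aa_LL: "aa \<longlonglongrightarrow> LL"
proof -
  obtain L where L: "aa \<longlonglongrightarrow> L" using aa_conv by blast
  hence "lim aa = L" by (rule limI)
  thus ?thesis using L by (simp add: LL_def)
qed

lemma aa_LL_bound: "n \<ge> 1 \<Longrightarrow> \<bar>aa n - LL\<bar> \<le> CB / real n"
proof -
  assume n: "n \<ge> 1"
  show ?thesis
  proof (rule tele[OF aa_LL])
    show "(\<lambda>m. CB / real m) \<longlonglongrightarrow> 0" by real_asymp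
    fix m assume "m \<ge> n"
    hence m: "real m \<ge> 1" using n by simp
    have "\<bar>aa (Suc m) - aa m\<bar> \<le> CB / (real m * (real m + 1))" by (rule boot) (use m in simp)
    also have "\<dots> = CB / real m - CB / real (Suc m)" using inv_diff[OF m] by simp
    finally show "\<bar>aa (Suc m) - aa m\<bar> \<le> CB / real m - CB / real (Suc m)" .
  qed
qed



lemma wstep:
  fixes M :: real assumes M: "M \<ge> 1"
  shows "(1 + ln (M+1)) / (M*(M+1)*(M+2)) \<le> (1 + ln (M+1)) / (M*(M+1)) - (1 + ln (M+2)) / ((M+1)*(M+2))"
proof -
  define a where "a = 1 + ln (M+1)"
  define b where "b = 1 + ln (M+2)"
  have p: "M > 0" "M + 1 > 0" "M + 2 > 0" using M by auto
  have a1: "a \<ge> 1" using M by (simp add: a_def)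
  have lnb: "ln (M+2) - ln (M+1) \<le> 1 / (M+1)"
  proof -
    have "ln (M+2) - ln (M+1) = ln ((M+2)/(M+1))" using p by (simp add: ln_div)
    also have "(M+2)/(M+1) = 1 + 1/(M+1)" using p by (simp add: field_simps)
    also have "ln (1 + 1/(M+1)) \<le> 1/(M+1)" by (rule ln_add_one_self_le_self) (use p in simp)
    finally show ?thesis .
  qed
  hence ba: "b - a \<le> 1 / (M+1)" by (simp add: a_def b_def)
  have "(b - a) * M \<le> (1 / (M+1)) * M" using ba p by (intro mult_right_mono) auto
  also have "(1 / (M+1)) * M \<le> 1" using p by (simp add: field_simps)
  finally have "(b - a) * M \<le> 1" .
  hence key: "a \<le> a * (M+2) - b * M" using a1 by (simp add: algebra_simps)
  have e1: "a / (M*(M+1)) = a * (M+2) / (M*(M+1)*(M+2))"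
    by (rule mult_divide_mult_cancel_right[symmetric]) (use p in simp)
  have e2: "b / ((M+1)*(M+2)) = b * M / (M*(M+1)*(M+2))"
  proof -
    have "b * M / (M*(M+1)*(M+2)) = (M * b) / (M * ((M+1)*(M+2)))" by (simp only: mult.assoc mult.commute[of b M])
    also have "\<dots> = b / ((M+1)*(M+2))" by (rule mult_divide_mult_cancel_left) (use p in simp)
    finally show ?thesis by simp
  qed
  have "a / (M*(M+1)*(M+2)) \<le> (a * (M+2) - b * M) / (M*(M+1)*(M+2))"
    using key p by (intro divide_right_mono) auto
  also have "\<dots> = a / (M*(M+1)) - b / ((M+1)*(M+2))"
    unfolding e1 e2 by (simp add: diff_divide_distrib)
  finally show ?thesis by (simp add: a_def b_def)
qed

lemma harm_le_ln1: "harm n \<le> 1 + ln (real n + 1)"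
proof -
  have "harm n \<le> (harm (n+1) :: real)" by (rule harm_mono) simp
  also have "\<dots> \<le> 1 + ln (real (n+1))" by (rule harm_le_ln) simp
  finally show ?thesis by (simp add: ac_simps)
qed

definition KK :: real where "KK = 3 * CB + exp 1"
definition xs :: "nat \<Rightarrow> real" where "xs m = aa m - LL * (1 + 1 / (real m + 1))"
definition ws :: "nat \<Rightarrow> real" where "ws m = KK * (1 + ln (real m + 1)) / (real m * (real m + 1))"

lemma LL_abs_le: "\<bar>LL\<bar> \<le> exp 1"
proof -
  have "(\<lambda>n. aa n) \<longlonglongrightarrow> LL" by (rule aa_LL)
  moreover have "\<forall>n. aa n \<le> exp 1" using aa_le by auto
  moreover have "\<forall>n. aa n \<ge> 0" using aa_pos less_imp_le by blast
  ultimately have "LL \<le> exp 1" "LL \<ge> 0"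
    by (auto intro: LIMSEQ_le_const2 LIMSEQ_le_const)
  thus ?thesis by simp
qed

lemma xs_step:
  "\<bar>xs (n+2) - xs (n+1)\<bar> \<le> KK * (1 + ln (real n + 2)) / ((real n + 1) * (real n + 2) * (real n + 3))"
proof -
  define N where "N = real n"
  have N0: "N \<ge> 0" by (simp add: N_def)
  define R where "R = (\<Sum>l\<le>n. (aa l - aa (n+1)) / ((real (n - l) + 2) * (real (n - l) + 3)))"
  have G: "\<bar>aa l - aa (n+1)\<bar> \<le> CB * (1 / real l - 1 / real (n+1))" if "1 \<le> l" "l \<le> n + 1" for l
  proof (rule gap[OF _ that])
    fix i assume i: "l \<le> i" "i < n + 1"
    show "\<bar>aa (Suc i) - aa i\<bar> \<le> CB / (real i * (real i + 1))"
      by (rule boot) (use i that in simp)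
  qed
  have RB: "\<bar>R\<bar> \<le> exp 1 / ((N + 2) * (N + 3)) + 2 * CB * harm n / ((N + 1) * (N + 3))"
    unfolding R_def N_def by (rule Rbound[OF less_imp_le[OF CB_pos] G])
  have eq: "real (n+2) * (aa (n+2) - aa (n+1)) = - aa (n+1) / (N + 3) + R"
    unfolding R_def N_def by (rule Rform)
  have rn: "real (n+2) = N + 2" by (simp add: N_def)
  have e': "(N + 2) * (aa (n+2) - aa (n+1)) = - aa (n+1) / (N + 3) + R"
    using eq unfolding rn .
  have d: "aa (n+2) - aa (n+1) = (- aa (n+1) / (N + 3) + R) / (N + 2)"
    unfolding e'[symmetric] by (rule nonzero_mult_div_cancel_left[symmetric]) (use N0 in simp)
  have inc: "xs (n+2) - xs (n+1) = (LL - aa (n+1)) / ((N + 2) * (N + 3)) + R / (N + 2)"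
  proof -
    have "xs (n+2) - xs (n+1) = (aa (n+2) - aa (n+1)) + LL * (1 / (N + 2) - 1 / (N + 3))"
      by (simp add: xs_def N_def algebra_simps)
    also have "1 / (N + 2) - 1 / (N + 3) = 1 / ((N + 2) * (N + 3))"
    proof -
      have p: "N + 2 > 0" "N + 3 > 0" using N0 by auto
      show ?thesis using p by (simp add: field_simps)
    qed
    also note d
    also have "(- aa (n+1) / (N + 3) + R) / (N + 2) + LL * (1 / ((N + 2) * (N + 3)))
        = (LL - aa (n+1)) / ((N + 2) * (N + 3)) + R / (N + 2)"
    proof -
      have h1: "(- aa (n+1) / (N + 3) + R) / (N + 2) = - aa (n+1) / ((N + 2) * (N + 3)) + R / (N + 2)"
        by (simp add: add_divide_distrib diff_divide_distrib divide_divide_eq_left mult.commute)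
      have h2: "(LL - aa (n+1)) / ((N + 2) * (N + 3)) = LL / ((N + 2) * (N + 3)) - aa (n+1) / ((N + 2) * (N + 3))"
        by (rule diff_divide_distrib)
      show ?thesis unfolding h1 h2 by simp
    qed
    finally show ?thesis .
  qed
  define D where "D = (N + 1) * (N + 2) * (N + 3)"
  define l where "l = ln (N + 2)"
  have l0: "l \<ge> 0" using N0 by (simp add: l_def)
  have Dpos: "D > 0" using N0 by (simp add: D_def)
  have hn: "harm n \<le> 1 + l"
  proof -
    have "harm n \<le> 1 + ln (N + 1)" using harm_le_ln1[of n] by (simp add: N_def)
    also have "ln (N + 1) \<le> l" using N0 by (simp add: l_def)
    finally show ?thesis by simp
  qed
  have T1: "\<bar>LL - aa (n+1)\<bar> / ((N + 2) * (N + 3)) \<le> CB / D"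
  proof -
    have "\<bar>LL - aa (n+1)\<bar> \<le> CB / (N + 1)"
      using aa_LL_bound[of "n+1"] by (simp add: N_def abs_minus_commute add.commute)
    hence "\<bar>LL - aa (n+1)\<bar> / ((N + 2) * (N + 3)) \<le> (CB / (N + 1)) / ((N + 2) * (N + 3))"
      using N0 by (intro divide_right_mono) auto
    also have "\<dots> = CB / D" by (simp add: D_def divide_divide_eq_left mult_ac)
    finally show ?thesis .
  qed
  have T2: "\<bar>R\<bar> / (N + 2) \<le> exp 1 / D + 2 * CB * harm n / D"
  proof -
    have "\<bar>R\<bar> / (N + 2) \<le> (exp 1 / ((N + 2) * (N + 3)) + 2 * CB * harm n / ((N + 1) * (N + 3))) / (N + 2)"
      using RB N0 by (intro divide_right_mono) auto
    also have "\<dots> = exp 1 / ((N + 2) * (N + 3) * (N + 2)) + 2 * CB * harm n / D"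
      by (simp add: add_divide_distrib divide_divide_eq_left D_def mult_ac)
    also have "exp 1 / ((N + 2) * (N + 3) * (N + 2)) \<le> exp 1 / D"
    proof (rule divide_left_mono)
      have "(N + 1) * ((N + 2) * (N + 3)) \<le> (N + 2) * ((N + 2) * (N + 3))"
        using N0 by (intro mult_right_mono) auto
      thus "D \<le> (N + 2) * (N + 3) * (N + 2)" by (simp add: D_def mult_ac)
      show "0 < (N + 2) * (N + 3) * (N + 2) * D" using Dpos N0 by simp
    qed simp
    finally show ?thesis by simp
  qed
  have num: "CB + exp 1 + 2 * CB * harm n \<le> KK * (1 + l)"
  proof -
    have "CB * 1 \<le> CB * (1 + l)" using l0 CB_pos by (intro mult_left_mono) auto
    moreover have "exp 1 * 1 \<le> exp 1 * (1 + l)" using l0 by (intro mult_left_mono) auto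
    moreover have "(2 * CB) * harm n \<le> (2 * CB) * (1 + l)" using hn CB_pos by (intro mult_left_mono) auto
    ultimately show ?thesis by (simp add: KK_def algebra_simps)
  qed
  have "\<bar>xs (n+2) - xs (n+1)\<bar> \<le> \<bar>LL - aa (n+1)\<bar> / ((N + 2) * (N + 3)) + \<bar>R\<bar> / (N + 2)"
    unfolding inc using N0 by (simp add: abs_divide abs_mult) (rule abs_triangle_ineq[THEN order_trans], simp add: abs_divide abs_mult)
  also have "\<dots> \<le> CB / D + (exp 1 / D + 2 * CB * harm n / D)" using T1 T2 by linarith
  also have "\<dots> = (CB + exp 1 + 2 * CB * harm n) / D" by (simp add: add_divide_distrib)
  also have "\<dots> \<le> KK * (1 + l) / D" using num Dpos by (intro divide_right_mono) auto
  finally show ?thesis by (simp add: D_def l_def N_def add_ac)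
qed



lemma KK_pos: "KK > 0" using CB_pos by (simp add: KK_def add_pos_pos)

lemma xs_bound: "n \<ge> 1 \<Longrightarrow> \<bar>xs n\<bar> \<le> ws n"
proof -
  assume n: "n \<ge> 1"
  have "\<bar>xs n - 0\<bar> \<le> ws n"
  proof (rule tele)
    have "(\<lambda>m. 1 / (real m + 1)) \<longlonglongrightarrow> 0" by real_asymp
    hence "(\<lambda>m. aa m - LL * (1 + 1 / (real m + 1))) \<longlonglongrightarrow> LL - LL * (1 + 0)"
      by (intro tendsto_intros aa_LL)
    moreover have "xs = (\<lambda>m. aa m - LL * (1 + 1 / (real m + 1)))" by (rule ext) (simp add: xs_def)
    ultimately show "xs \<longlonglongrightarrow> 0" by simp
    show "ws \<longlonglongrightarrow> 0" unfolding ws_def by real_asymp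
    fix m assume "m \<ge> n"
    then obtain k where k: "m = k + 1" using n by (metis add.commute le_Suc_ex le_trans plus_1_eq_Suc)
    define M where "M = real k + 1"
    have M1: "M \<ge> 1" by (simp add: M_def)
    have "\<bar>xs (k+2) - xs (k+1)\<bar> \<le> KK * (1 + ln (real k + 2)) / ((real k + 1) * (real k + 2) * (real k + 3))"
      by (rule xs_step)
    also have "\<dots> = KK * ((1 + ln (M+1)) / (M*(M+1)*(M+2)))"
      by (simp add: M_def add_ac)
    also have "\<dots> \<le> KK * ((1 + ln (M+1)) / (M*(M+1)) - (1 + ln (M+2)) / ((M+1)*(M+2)))"
      by (rule mult_left_mono[OF wstep[OF M1]]) (use KK_pos in simp)
    also have "\<dots> = ws m - ws (Suc m)"
      by (simp add: ws_def k M_def right_diff_distrib add_ac)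
    finally show "\<bar>xs (Suc m) - xs m\<bar> \<le> ws m - ws (Suc m)"
      by (simp add: k)
  qed
  thus ?thesis by simp
qed



definition bseq :: "nat \<Rightarrow> real" where "bseq n = aa n - (if n = 0 then 0 else aa (n - 1))"

lemma bseq_partial: "(\<Sum>i<Suc N. bseq i) = aa N"
  by (induction N) (simp_all add: bseq_def)

lemma bseq_sums: "bseq sums LL"
proof -
  have "(\<lambda>N. \<Sum>i<Suc N. bseq i) \<longlonglongrightarrow> LL" unfolding bseq_partial by (rule aa_LL)
  hence "(\<lambda>N. \<Sum>i<N. bseq i) \<longlonglongrightarrow> LL" by (rule LIMSEQ_imp_Suc)
  thus ?thesis by (simp add: sums_def)
qed

lemma bseq_abs_summable: "summable (\<lambda>n. \<bar>bseq n\<bar>)"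
proof (rule summable_comparison_test'[where N = 2])
  show "summable (\<lambda>n. 2 * CB * inverse (real n ^ 2))"
    by (intro summable_mult inverse_power_summable) simp
  fix n :: nat assume n: "n \<ge> 2"
  obtain j where j0: "n = Suc j" using n by (cases n) auto
  have j: "n = Suc j" "j \<ge> 1" using j0 n by auto
  have J: "real j \<ge> 1" using j by simp
  have "\<bar>bseq n\<bar> = \<bar>aa (Suc j) - aa j\<bar>" by (simp add: bseq_def j)
  also have "\<dots> \<le> CB / (real j * (real j + 1))" by (rule boot) (use j in simp)
  also have "\<dots> \<le> CB / ((real j + 1) * (real j + 1) / 2)"
  proof -
    have "(real j + 1) * (real j + 1) \<le> (2 * real j) * (real j + 1)" using J by (intro mult_right_mono) auto
    hence le: "(real j + 1) * (real j + 1) / 2 \<le> real j * (real j + 1)" by simp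
    have pos: "0 < (real j * (real j + 1)) * ((real j + 1) * (real j + 1) / 2)" using J by simp
    show ?thesis by (rule divide_left_mono[OF le _ pos]) (use CB_pos in simp)
  qed
  also have "\<dots> = 2 * CB * inverse (real n ^ 2)"
  proof -
    define P where "P = (real j + 1) * (real j + 1)"
    have P: "P > 0" using J by (simp add: P_def)
    have "real n ^ 2 = P" by (simp add: j P_def power2_eq_square add.commute)
    moreover have "CB / (P / 2) = 2 * CB * inverse P" using P by (simp add: field_simps)
    ultimately show ?thesis by (simp add: P_def)
  qed
  finally show "norm \<bar>bseq n\<bar> \<le> 2 * CB * inverse (real n ^ 2)" by simp
qed

definition BB :: "real \<Rightarrow> real" where "BB x = (\<Sum>n. bseq n * x^n)"

lemma BB_cont: "continuous_on {0..1} BB"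
proof -
  have ul: "uniform_limit {0..1} (\<lambda>N x. \<Sum>i<N. bseq i * x^i) (\<lambda>x. \<Sum>i. bseq i * x^i) sequentially"
  proof (rule Weierstrass_m_test[OF _ bseq_abs_summable])
    fix n and x :: real assume "x \<in> {0..1}"
    hence "\<bar>x\<bar>^n \<le> 1" by (intro power_le_one) auto
    hence "\<bar>bseq n\<bar> * \<bar>x\<bar>^n \<le> \<bar>bseq n\<bar> * 1" by (intro mult_left_mono) auto
    thus "norm (bseq n * x^n) \<le> \<bar>bseq n\<bar>" by (simp add: abs_mult power_abs)
  qed
  have "continuous_on {0..1} (\<lambda>x. \<Sum>i. bseq i * x^i)"
  proof (rule uniform_limit_theorem[OF _ ul])
    show "\<forall>\<^sub>F n in sequentially. continuous_on {0..1} (\<lambda>x. \<Sum>i<n. bseq i * x^i)"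
      by (intro always_eventually allI continuous_on_sum continuous_on_mult continuous_on_const continuous_on_power continuous_on_id)
  qed simp
  thus ?thesis by (simp add: BB_def[abs_def])
qed

lemma BB_1: "BB 1 = LL"
  using bseq_sums by (simp add: BB_def sums_iff)

lemma BB_eq:
  assumes x: "0 < x" "x < 1"
  shows "BB x = (1 - x) * exp (- ln (1 - x) / x)"
proof -
  have ax: "\<bar>-x\<bar> < 1" using x by simp
  have pt: "coeff_c n * (-x)^n = aa n * x^n" for n
  proof -
    have "(-1::real)^n * (-1)^n = 1" by (simp add: power_mult_distrib[symmetric])
    hence "(-1::real)^n * aa n * ((-1)^n * x^n) = aa n * x^n" by (simp add: algebra_simps)
    thus ?thesis by (simp add: coeff_c_aa power_minus[of x])
  qed
  have sA: "(\<lambda>n. aa n * x^n) sums CC (-x)"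
  proof -
    have "(\<lambda>n. coeff_c n * (-x)^n) sums CC (-x)"
      unfolding CC_def by (rule summable_sums, rule bounded_coeff_summable'[OF abs_coeff_c_le ax])
    thus ?thesis by (simp add: pt)
  qed
  define g where "g n = (if n = 0 then 0 else aa (n - 1) * x^n)" for n
  have "(\<lambda>n. g (Suc n)) sums (x * CC (-x))"
  proof -
    have "(\<lambda>n. x * (aa n * x^n)) sums (x * CC (-x))" by (rule sums_mult[OF sA])
    moreover have "g (Suc n) = x * (aa n * x^n)" for n by (simp add: g_def)
    ultimately show ?thesis by simp
  qed
  hence sg: "g sums (x * CC (-x))" by (subst (asm) sums_Suc_iff) (simp add: g_def)
  have "(\<lambda>n. aa n * x^n - g n) sums (CC (-x) - x * CC (-x))" by (rule sums_diff[OF sA sg])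
  moreover have "aa n * x^n - g n = bseq n * x^n" for n by (simp add: g_def bseq_def algebra_simps)
  ultimately have "(\<lambda>n. bseq n * x^n) sums ((1 - x) * CC (-x))" by (simp add: algebra_simps)
  hence "BB x = (1 - x) * CC (-x)" by (simp add: BB_def sums_iff)
  also have "CC (-x) = exp (- ln (1 - x) / x)"
    using x by (simp add: CC_eq_exp_HH[OF ax] HH_eq[OF ax])
  finally show ?thesis .
qed

lemma LL_eq_1: "LL = 1"
proof -
  have "(BB \<longlongrightarrow> BB 1) (at 1 within {0..1})"
    using BB_cont by (simp add: continuous_on_def)
  hence t1: "(BB \<longlongrightarrow> LL) (at_left 1)"
    by (simp add: at_within_Icc_at_left BB_1)
  have ev: "eventually (\<lambda>x. (1 - x) * exp (- ln (1 - x) / x) = BB x) (at_left (1::real))"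
    using eventually_at_left_real[of 0 "1::real"] by (auto elim!: eventually_mono simp: BB_eq)
  have "((\<lambda>x::real. (1 - x) * exp (- ln (1 - x) / x)) \<longlongrightarrow> 1) (at_left 1)" by real_asymp
  hence t2: "(BB \<longlongrightarrow> 1) (at_left 1)" by (rule Lim_transform_eventually[OF _ ev])
  show ?thesis using tendsto_unique[OF _ t1 t2] by simp
qed



lemma aa_asym: "n \<ge> 1 \<Longrightarrow> \<bar>aa n - (1 + 1 / real n)\<bar> \<le> (KK + 1) * ((1 + ln (real n + 1)) / (real n * (real n + 1)))"
proof -
  assume n: "n \<ge> 1"
  have N: "real n \<ge> 1" using n by simp
  have e: "aa n - (1 + 1 / real n) = xs n - 1 / (real n * (real n + 1))"
  proof -
    have "1 / (real n * (real n + 1)) = 1 / real n - 1 / (real n + 1)" using N by (simp add: field_simps)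
    thus ?thesis by (simp add: xs_def LL_eq_1)
  qed
  have l0: "1 \<le> 1 + ln (real n + 1)" using N by simp
  have "\<bar>aa n - (1 + 1 / real n)\<bar> \<le> \<bar>xs n\<bar> + 1 / (real n * (real n + 1))"
  proof -
    have "\<bar>xs n - 1 / (real n * (real n + 1))\<bar> \<le> \<bar>xs n\<bar> + \<bar>1 / (real n * (real n + 1))\<bar>"
      by (rule abs_triangle_ineq4)
    moreover have "\<bar>1 / (real n * (real n + 1))\<bar> = 1 / (real n * (real n + 1))" using N by simp
    ultimately show ?thesis unfolding e by simp
  qed
  also have "\<dots> \<le> ws n + 1 / (real n * (real n + 1))" using xs_bound[OF n] by simp
  also have "\<dots> = KK * ((1 + ln (real n + 1)) / (real n * (real n + 1))) + 1 * (1 / (real n * (real n + 1)))"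
    by (simp add: ws_def)
  also have "\<dots> \<le> KK * ((1 + ln (real n + 1)) / (real n * (real n + 1))) + (1 + ln (real n + 1)) * (1 / (real n * (real n + 1)))"
    using l0 N by (intro add_left_mono mult_right_mono) auto
  also have "(1 + ln (real n + 1)) * (1 / (real n * (real n + 1))) = (1 + ln (real n + 1)) / (real n * (real n + 1))"
    by simp
  finally have fin: "\<bar>aa n - (1 + 1 / real n)\<bar> \<le> KK * ((1 + ln (real n + 1)) / (real n * (real n + 1)))
      + (1 + ln (real n + 1)) / (real n * (real n + 1))" .
  thus ?thesis by (simp only: distrib_right mult_1_left)
qed

theorem mainTheorem1:
  shows "(\<forall>x::real. x > 1 \<longrightarrow>
            (\<lambda>j. coeff_c j / x ^ j) sums ((1 + 1 / x) powr x))
       \<and> (\<lambda>j. coeff_c j - (-1) ^ j * (1 + 1 / real j))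
            \<in> O(\<lambda>j. ln (real j) / (real j) ^ 2)"
proof (intro conjI allI impI)
  fix x :: real assume "x > 1" thus "(\<lambda>j. coeff_c j / x ^ j) sums ((1 + 1 / x) powr x)" by (rule part1)
next
  have "(\<lambda>j. coeff_c j - (-1) ^ j * (1 + 1 / real j)) \<in> O(\<lambda>j. (1 + ln (real j + 1)) / (real j * (real j + 1)))"
  proof (rule bigoI[where c = "KK + 1"])
    show "\<forall>\<^sub>F j in at_top. norm (coeff_c j - (-1) ^ j * (1 + 1 / real j))
            \<le> (KK + 1) * norm ((1 + ln (real j + 1)) / (real j * (real j + 1)))"
    proof (rule eventually_mono[OF eventually_ge_at_top[of 1]])
      fix j :: nat assume j: "1 \<le> j"
      have "coeff_c j - (-1) ^ j * (1 + 1 / real j) = (-1)^j * (aa j - (1 + 1 / real j))"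
        by (simp add: coeff_c_aa algebra_simps)
      hence "norm (coeff_c j - (-1) ^ j * (1 + 1 / real j)) = \<bar>aa j - (1 + 1 / real j)\<bar>"
        by (simp add: abs_mult)
      also have "\<dots> \<le> (KK + 1) * ((1 + ln (real j + 1)) / (real j * (real j + 1)))" by (rule aa_asym[OF j])
      also have "(1 + ln (real j + 1)) / (real j * (real j + 1)) = norm ((1 + ln (real j + 1)) / (real j * (real j + 1)))"
        using j by simp
      finally show "norm (coeff_c j - (-1) ^ j * (1 + 1 / real j))
            \<le> (KK + 1) * norm ((1 + ln (real j + 1)) / (real j * (real j + 1)))" .
    qed
  qed
  also have "(\<lambda>j. (1 + ln (real j + 1)) / (real j * (real j + 1))) \<in> O(\<lambda>j. ln (real j) / (real j) ^ 2)"
    by real_asymp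
  finally show "(\<lambda>j. coeff_c j - (-1) ^ j * (1 + 1 / real j)) \<in> O(\<lambda>j. ln (real j) / (real j) ^ 2)" .
qed


end
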